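(* Let $f\in C^{1,1}_L(\mathbb{R}^n)$. For all $(u_1,u_2)\in\mathbb{R}^n\times\mathbb{R}^n$ and every matrix $H\in\mathbb{R}^{n\times n}$, $$\psi(u_1,u_2,H):=f(u_1)-f(u_2)-\tfrac{1}{2L}\langle (LI-H)(u_1-u_2),\nabla f(u_1)\rangle-\tfrac{1}{2L}\langle (LI+H)(u_1-u_2),\nabla f(u_2)\rangle-\tfrac{1}{4L}\|H(u_1-u_2)\|^2-\tfrac{L}{4}\|u_1-u_2\|^2\le 0 .$$
   Context: Let $L>0$. $C^{1,1}_L(\mathbb{R}^n)$ denotes the set of differentiable functions $f:\mathbb{R}^n\to\mathbb{R}$ with $\|\nabla f(u_1)-\nabla f(u_2)\|\le L\|u_1-u_2\|$ for all $u_1,u_2\in\mathbb{R}^n$ (Euclidean norm). *)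

theory Defs
  imports "HOL-Analysis.Analysis"
begin

definition C11 :: "real \<Rightarrow> (real^'n \<Rightarrow> real) \<Rightarrow> (real^'n \<Rightarrow> real^'n) \<Rightarrow> bool" where
  "C11 L f g \<longleftrightarrow> (\<forall>x. (f has_derivative (\<lambda>h. g x \<bullet> h)) (at x))
     \<and> (\<forall>u1 u2. norm (g u1 - g u2) \<le> L * norm (u1 - u2))"

end

theory Submission
  imports Defs
begin

lemma line_deriv:
  assumes "C11 L f g"
  shows "((\<lambda>t. f (x + t *\<^sub>R v)) has_real_derivative (g (x + t *\<^sub>R v) \<bullet> v)) (at t)"
proof -
  have d1: "((\<lambda>t. x + t *\<^sub>R v) has_derivative (\<lambda>s. s *\<^sub>R v)) (at t)"
    by (auto intro!: derivative_eq_intros)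
  have d2: "(f has_derivative (\<lambda>h. g (x + t *\<^sub>R v) \<bullet> h)) (at (x + t *\<^sub>R v))"
    using assms unfolding C11_def by blast
  have "((\<lambda>t. f (x + t *\<^sub>R v)) has_derivative (\<lambda>s. g (x + t *\<^sub>R v) \<bullet> (s *\<^sub>R v))) (at t)"
    using has_derivative_compose[OF d1 d2] by (simp add: o_def)
  moreover have "(\<lambda>s. g (x + t *\<^sub>R v) \<bullet> (s *\<^sub>R v)) = (*) (g (x + t *\<^sub>R v) \<bullet> v)"
    by (auto simp: mult.commute)
  ultimately show ?thesis unfolding has_field_derivative_def by simp
qed

lemma lower:
  assumes "L > 0" "C11 L f g"
  shows "f z \<ge> f x + g x \<bullet> (z - x) - L / 2 * (norm (z - x))\<^sup>2"
proof -
  define v where "v = z - x"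
  define p where "p = (\<lambda>t. f (x + t *\<^sub>R v) - t * (g x \<bullet> v) + L / 2 * t\<^sup>2 * (norm v)\<^sup>2)"
  define p' where "p' = (\<lambda>t. g (x + t *\<^sub>R v) \<bullet> v - g x \<bullet> v + L * t * (norm v)\<^sup>2)"
  have D: "(p has_real_derivative p' t) (at t)" for t
    unfolding p_def p'_def
    by (auto intro!: derivative_eq_intros line_deriv[OF assms(2)] simp: power2_eq_square)
  obtain \<xi> where xi: "0 < \<xi>" "\<xi> < 1" "p 1 - p 0 = (1 - 0) * p' \<xi>"
    using MVT2[of 0 1 p p'] D by auto
  have lip: "norm (g (x + \<xi> *\<^sub>R v) - g x) \<le> L * norm (\<xi> *\<^sub>R v)"
    using assms(2) unfolding C11_def by (metis add_diff_cancel_left')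
  have "(g (x + \<xi> *\<^sub>R v) - g x) \<bullet> v \<ge> - (norm (g (x + \<xi> *\<^sub>R v) - g x) * norm v)"
    using Cauchy_Schwarz_ineq2[of "g (x + \<xi> *\<^sub>R v) - g x" v] by linarith
  moreover have "norm (g (x + \<xi> *\<^sub>R v) - g x) * norm v \<le> L * \<xi> * norm v * norm v"
    using lip xi by (simp add: mult_right_mono)
  ultimately have "p' \<xi> \<ge> 0" unfolding p'_def by (simp add: inner_diff_left power2_eq_square)
  hence "p 1 \<ge> p 0" using xi by simp
  thus ?thesis unfolding p_def v_def by simp
qed

lemma upper:
  assumes "L > 0" "C11 L f g"
  shows "f z \<le> f x + g x \<bullet> (z - x) + L / 2 * (norm (z - x))\<^sup>2"
proof -
  have "C11 L (\<lambda>x. - f x) (\<lambda>x. - g x)"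
    using assms(2) unfolding C11_def
    by (auto intro!: derivative_eq_intros simp: norm_minus_commute)
  from lower[OF assms(1) this, of x z] show ?thesis by simp
qed

theorem lemma4p4:
  fixes L :: real and f :: "real^'n \<Rightarrow> real" and g :: "real^'n \<Rightarrow> real^'n"
    and u1 u2 :: "real^'n" and H :: "real^'n^'n"
  assumes "L > 0" and "C11 L f g"
  shows "f u1 - f u2
          - 1 / (2 * L) * (((L *\<^sub>R mat 1 - H) *v (u1 - u2)) \<bullet> g u1)
          - 1 / (2 * L) * (((L *\<^sub>R mat 1 + H) *v (u1 - u2)) \<bullet> g u2)
          - 1 / (4 * L) * (norm (H *v (u1 - u2)))\<^sup>2
          - L / 4 * (norm (u1 - u2))\<^sup>2 \<le> 0"
proof -
  define d where "d = u1 - u2"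
  define p where "p = H *v d"
  define a where "a = (1/2) *\<^sub>R d"
  define e where "e = g u1 - g u2"
  define w where "w = (1 / (2 * L)) *\<^sub>R e"
  define z where "z = u1 - a + w"
  have uz1: "u1 - z = a - w" unfolding z_def by simp
  have aa: "a + a = d" unfolding a_def by (metis scaleR_add_left field_sum_of_halves scaleR_one)
  have uz2: "z - u2 = a + w" unfolding z_def using aa unfolding d_def by (simp add: algebra_simps)
  have b1: "f u1 - f z \<le> g u1 \<bullet> (a - w) + L/2 * (norm (a - w))\<^sup>2"
  proof -
    have "z - u1 = - (a - w)" using uz1 by (metis minus_diff_eq)
    thus ?thesis using lower[OF assms, of u1 z] by (simp only: norm_minus_cancel inner_minus_right)
  qed
  have b2: "f z - f u2 \<le> g u2 \<bullet> (a + w) + L/2 * (norm (a + w))\<^sup>2"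
    using upper[OF assms, of z u2] uz2 by simp
  have key: "g u1 \<bullet> (a - w) + L/2 * (norm (a - w))\<^sup>2 + (g u2 \<bullet> (a + w) + L/2 * (norm (a + w))\<^sup>2)
     = 1/2 * (d \<bullet> (g u1 + g u2)) - 1/(4*L) * (e \<bullet> e) + L/4 * (d \<bullet> d)"
    using assms(1)
    unfolding power2_norm_eq_inner a_def w_def e_def
    by (simp add: inner_add_left inner_add_right inner_diff_left inner_diff_right field_simps inner_commute)
  have sq: "1/(2*L) * (p \<bullet> e) - 1/(4*L) * (p \<bullet> p) \<le> 1/(4*L) * (e \<bullet> e)"
  proof -
    have "0 \<le> (p - e) \<bullet> (p - e)" by simp
    hence "0 \<le> p \<bullet> p - 2 * (p \<bullet> e) + e \<bullet> e"
      by (simp add: inner_diff_left inner_diff_right inner_commute)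
    hence "L * (p \<bullet> e * 8) \<le> L * (e \<bullet> e * 4 + p \<bullet> p * 4)"
      using assms(1) by (intro mult_left_mono) auto
    thus ?thesis using assms(1) by (simp add: field_simps distrib_left)
  qed
  have m1: "(L *\<^sub>R mat 1 - H) *v d = L *\<^sub>R d - p"
    unfolding p_def by (simp add: matrix_vector_mult_diff_rdistrib scaleR_matrix_vector_assoc[symmetric])
  have m2: "(L *\<^sub>R mat 1 + H) *v d = L *\<^sub>R d + p"
    unfolding p_def by (simp add: matrix_vector_mult_add_rdistrib scaleR_matrix_vector_assoc[symmetric])
  have "f u1 - f u2 \<le> 1/2 * (d \<bullet> (g u1 + g u2)) - 1/(4*L) * (e \<bullet> e) + L/4 * (d \<bullet> d)"
    using b1 b2 key by linarith
  moreover have "1 / (2 * L) * ((L *\<^sub>R d - p) \<bullet> g u1) + 1 / (2 * L) * ((L *\<^sub>R d + p) \<bullet> g u2)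
     = 1/2 * (d \<bullet> (g u1 + g u2)) - 1/(2*L) * (p \<bullet> e)"
    using assms(1) unfolding e_def
    by (simp add: inner_add_left inner_add_right inner_diff_left inner_diff_right field_simps)
  ultimately show ?thesis
    using sq unfolding m1[unfolded d_def p_def] m2[unfolded d_def p_def]
    apply (fold d_def p_def)
    by (simp add: power2_norm_eq_inner)
qed

end
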